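(* There is no integral quadruple $(a,b,c,d)$ with $c>b>a\ge2$ and $d\ge3$ satisfying \[\frac{1}{a}+\frac{1}{b}+\frac{1}{c}+\frac{d+1}{2d}=2+\frac{1}{abcd}.\] *)

theory Defs
  imports Complex_Main
begin

end

theory Submission
  imports Defs
begin

theorem proposition3p2:
  shows "\<not> (\<exists>a b c d :: int. 2 \<le> a \<and> a < b \<and> b < c \<and> 3 \<le> d \<and>
     1 / real_of_int a + 1 / real_of_int b + 1 / real_of_int c
       + (real_of_int d + 1) / (2 * real_of_int d)
     = 2 + 1 / real_of_int (a * b * c * d))"
proof
  assume "\<exists>a b c d :: int. 2 \<le> a \<and> a < b \<and> b < c \<and> 3 \<le> d \<and>
     1 / real_of_int a + 1 / real_of_int b + 1 / real_of_int c
       + (real_of_int d + 1) / (2 * real_of_int d)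
     = 2 + 1 / real_of_int (a * b * c * d)"
  then obtain a b c d :: int where h: "2 \<le> a" "a < b" "b < c" "3 \<le> d" and
    e: "1 / real_of_int a + 1 / real_of_int b + 1 / real_of_int c
       + (real_of_int d + 1) / (2 * real_of_int d)
     = 2 + 1 / real_of_int (a * b * c * d)" by blast
  have A: "real_of_int a \<ge> 2" "real_of_int b \<ge> 3" "real_of_int c \<ge> 4" "real_of_int d \<ge> 3"
    using h by linarith+
  have 1: "1 / real_of_int a \<le> 1/2" using A by (simp add: field_simps)
  have 2: "1 / real_of_int b \<le> 1/3" using A by (simp add: field_simps)
  have 3: "1 / real_of_int c \<le> 1/4" using A by (simp add: field_simps)
  have 4: "(real_of_int d + 1) / (2 * real_of_int d) \<le> 2/3" using A by (simp add: field_simps)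
  have p: "real_of_int (a*b*c*d) > 0" using h by (simp add: zero_less_mult_iff)
  have 5: "1 / real_of_int (a * b * c * d) > 0" using p by simp
  show False using 1 2 3 4 5 e by linarith
qed

end
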